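(* Assume Assumptions 1–4 (stated in the context) hold, with the periodic boundary specification, and assume the discount factor $\beta$ is sufficiently large. Then there exists $L_1<\infty$, independent of $\theta,z,t$, such that for every $\theta\in\Theta$ the function $h_\theta$ is locally Lipschitz continuous with Lipschitz constant $L_1$.
   Context: Local Lipschitz continuity with constant $L$ means: there is $\delta>0$ such that $|f(y_1)-f(y_2)|\le L|y_1-y_2|$ whenever $|y_1-y_2|<\delta$. A state is $s=(x,z,t)$; policies $\pi_\theta(a\mid s)$, $a\in\{0,1\}$, $\theta\in\Theta$. $F$ is the distribution of $(Y(1),Y(0),W,X)$ (also the marginal of $x$); $r(x,1)=E[Y(1)-Y(0)\mid x]$. $G_0,G_1$ are known functions of $s$, $\lambda(t)>0$ is a known arrival rate and $\beta$ is a discount rate. Define $$\bar r_\theta(z,t)=E_{x\sim F}[r(x,1)\pi_\theta(1\mid s)],\qquad \bar G_\theta(z,t)=E_{x\sim F}[G_1\pi_\theta(1\mid s)+G_0\pi_\theta(0\mid s)].$$ Assume $\lambda,\bar G_\theta,\bar r_\theta$ are $T_p$-periodic in $t$. $h_\theta$ is the bounded, continuous, $T_p$-periodic (in $t$) viscosity solution on $\mathbb R\times\mathbb R$ of $\beta h-\lambda(t)\bar G_\theta\partial_z h-\partial_t h-\lambda(t)\bar r_\theta=0$. Assumption 1: $\bar G_\theta,\bar r_\theta$ are Lipschitz uniformly in $\theta$; $\lambda$ is bounded, Lipschitz and bounded away from 0; $|\bar r_\theta|,|\bar G_\theta|\le M$. Assumption 2: $|Y(a)|,|G_a(s)|\le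 M$; the classes $\{\pi_\theta(1\mid\cdot,z,t)\}$ and $\{\pi_\theta(a\mid\cdot,z,t)G_a(\cdot,z,t)\}$ (indexed by $(z,t),\theta$) are VC-subgraph with finite indices. Assumption 3: $Y(a,z,t)\equiv Y(a)$; the data are iid from $F$; $(Y(1),Y(0))\perp\!\!\!\perp W\mid X$; $p(x)=E[W\mid X=x]\in[\kappa,1-\kappa]$. Assumption 4: the nonparametric estimators of $E[Y(w)\mid X=x]$ and $p(x)$ converge in sup norm at rate $O_p(n^{-c})$ for some $c>0$ and in mean square at rate $n^{-\xi}$ for some $\xi>1/2$. *)

theory Defs
  imports "HOL-Analysis.Analysis" "HOL-Probability.Probability"
begin

text \<open>Points of the (z,t) plane are pairs (z,t) :: real \<times> real (Euclidean norm).\<close>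

definition locally_lipschitz_with :: "real \<Rightarrow> (real \<times> real \<Rightarrow> real) \<Rightarrow> bool" where
  "locally_lipschitz_with L f \<longleftrightarrow>
     (\<exists>\<delta>>0. \<forall>y1 y2. norm (y1 - y2) < \<delta> \<longrightarrow> \<bar>f y1 - f y2\<bar> \<le> L * norm (y1 - y2))"

definition C1_test :: "(real \<times> real \<Rightarrow> real) \<Rightarrow> (real \<times> real \<Rightarrow> real) \<Rightarrow> (real \<times> real \<Rightarrow> real) \<Rightarrow> bool" where
  "C1_test phi phiz phit \<longleftrightarrow>
     continuous_on UNIV phiz \<and> continuous_on UNIV phit \<and>
     (\<forall>x. (phi has_derivative (\<lambda>(dz, dt). phiz x * dz + phit x * dt)) (at x))"

definition local_max_at :: "(real \<times> real \<Rightarrow> real) \<Rightarrow> real \<times> real \<Rightarrow> bool" where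
  "local_max_at f x \<longleftrightarrow> (\<exists>e>0. \<forall>y\<in>ball x e. f y \<le> f x)"

definition local_min_at :: "(real \<times> real \<Rightarrow> real) \<Rightarrow> real \<times> real \<Rightarrow> bool" where
  "local_min_at f x \<longleftrightarrow> (\<exists>e>0. \<forall>y\<in>ball x e. f x \<le> f y)"

definition hamF ::
  "real \<Rightarrow> (real \<Rightarrow> real) \<Rightarrow> (real \<Rightarrow> real \<Rightarrow> real) \<Rightarrow> (real \<Rightarrow> real \<Rightarrow> real)
    \<Rightarrow> real \<times> real \<Rightarrow> real \<Rightarrow> real \<Rightarrow> real \<Rightarrow> real" where
  "hamF \<beta> lam Gb rb x u pz pt =
     \<beta> * u - lam (snd x) * Gb (fst x) (snd x) * pz - pt - lam (snd x) * rb (fst x) (snd x)"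

definition viscosity_solution ::
  "real \<Rightarrow> (real \<Rightarrow> real) \<Rightarrow> (real \<Rightarrow> real \<Rightarrow> real) \<Rightarrow> (real \<Rightarrow> real \<Rightarrow> real)
    \<Rightarrow> (real \<times> real \<Rightarrow> real) \<Rightarrow> bool" where
  "viscosity_solution \<beta> lam Gb rb h \<longleftrightarrow>
     continuous_on UNIV h \<and>
     (\<forall>phi phiz phit x. C1_test phi phiz phit \<and> local_max_at (\<lambda>y. h y - phi y) x \<longrightarrow>
         hamF \<beta> lam Gb rb x (h x) (phiz x) (phit x) \<le> 0) \<and>
     (\<forall>phi phiz phit x. C1_test phi phiz phit \<and> local_min_at (\<lambda>y. h y - phi y) x \<longrightarrow>
         hamF \<beta> lam Gb rb x (h x) (phiz x) (phit x) \<ge> 0)"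

text \<open>Averaged reward and drift: pol th x z t is the policy probability pi_theta(1 | x,z,t),
  so pi_theta(0 | s) = 1 - pol th x z t; F is the marginal distribution of x.\<close>
definition rbar :: "'x measure \<Rightarrow> ('x \<Rightarrow> real) \<Rightarrow> ('p \<Rightarrow> 'x \<Rightarrow> real \<Rightarrow> real \<Rightarrow> real)
    \<Rightarrow> 'p \<Rightarrow> real \<Rightarrow> real \<Rightarrow> real" where
  "rbar F r pol th z t = (\<integral>x. r x * pol th x z t \<partial>F)"

definition Gbar :: "'x measure \<Rightarrow> ('x \<Rightarrow> real \<Rightarrow> real \<Rightarrow> real) \<Rightarrow> ('x \<Rightarrow> real \<Rightarrow> real \<Rightarrow> real)
    \<Rightarrow> ('p \<Rightarrow> 'x \<Rightarrow> real \<Rightarrow> real \<Rightarrow> real) \<Rightarrow> 'p \<Rightarrow> real \<Rightarrow> real \<Rightarrow> real" where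
  "Gbar F G0 G1 pol th z t = (\<integral>x. G1 x z t * pol th x z t + G0 x z t * (1 - pol th x z t) \<partial>F)"

end

theory Submission
  imports Defs
begin

lemma C1_q:
  fixes c a b :: real
  assumes c: "c > 0"
  shows "C1_test (\<lambda>x. sqrt (c + (fst x - a)^2 + (snd x - b)^2))
     (\<lambda>x. (fst x - a) / sqrt (c + (fst x - a)^2 + (snd x - b)^2))
     (\<lambda>x. (snd x - b) / sqrt (c + (fst x - a)^2 + (snd x - b)^2))"
proof -
  have pos: "\<And>x::real\<times>real. 0 < c + (fst x - a)^2 + (snd x - b)^2"
    using c by (simp add: add_pos_nonneg)
  have ne: "\<And>x::real\<times>real. sqrt (c + (fst x - a)^2 + (snd x - b)^2) \<noteq> 0"
    using pos by (metis less_irrefl real_sqrt_eq_zero_cancel_iff)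
  show ?thesis
    unfolding C1_test_def
  proof (intro conjI allI)
    show "continuous_on UNIV (\<lambda>x. (fst x - a) / sqrt (c + (fst x - a)^2 + (snd x - b)^2))"
      using ne by (intro continuous_intros) auto
    show "continuous_on UNIV (\<lambda>x. (snd x - b) / sqrt (c + (fst x - a)^2 + (snd x - b)^2))"
      using ne by (intro continuous_intros) auto
    fix x :: "real \<times> real"
    show "((\<lambda>x. sqrt (c + (fst x - a)^2 + (snd x - b)^2)) has_derivative
       (\<lambda>(dz, dt). (fst x - a) / sqrt (c + (fst x - a)^2 + (snd x - b)^2) * dz +
                   (snd x - b) / sqrt (c + (fst x - a)^2 + (snd x - b)^2) * dt)) (at x)"
    proof -
      have g: "((\<lambda>x. c + (fst x - a)^2 + (snd x - b)^2) has_derivative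
          (\<lambda>h. 2 * (fst x - a) * fst h + 2 * (snd x - b) * snd h)) (at x)"
        by (auto intro!: derivative_eq_intros simp: fun_eq_iff algebra_simps)
      have "((\<lambda>x. sqrt (c + (fst x - a)^2 + (snd x - b)^2)) has_derivative
          (\<lambda>h. (2 * (fst x - a) * fst h + 2 * (snd x - b) * snd h) *
             (inverse (sqrt (c + (fst x - a)^2 + (snd x - b)^2)) / 2))) (at x)"
        by (rule has_derivative_real_sqrt[OF pos g])
      then show ?thesis
        by (rule has_derivative_eq_rhs) (use ne in \<open>auto simp: fun_eq_iff field_simps split: prod.splits\<close>)
    qed
  qed
qed

lemma C1_lin:
  assumes "C1_test f fz ft" "C1_test g gz gt"
  shows "C1_test (\<lambda>x. p * f x + q * g x) (\<lambda>x. p * fz x + q * gz x) (\<lambda>x. p * ft x + q * gt x)"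
  using assms unfolding C1_test_def
proof (intro conjI allI)
  assume A: "continuous_on UNIV fz \<and> continuous_on UNIV ft \<and>
    (\<forall>x. (f has_derivative (\<lambda>(dz, dt). fz x * dz + ft x * dt)) (at x))"
    and B: "continuous_on UNIV gz \<and> continuous_on UNIV gt \<and>
    (\<forall>x. (g has_derivative (\<lambda>(dz, dt). gz x * dz + gt x * dt)) (at x))"
  show "continuous_on UNIV (\<lambda>x. p * fz x + q * gz x)" using A B by (intro continuous_intros) auto
  show "continuous_on UNIV (\<lambda>x. p * ft x + q * gt x)" using A B by (intro continuous_intros) auto
  fix x
  have fd: "(f has_derivative (\<lambda>(dz, dt). fz x * dz + ft x * dt)) (at x)" using A by blast
  have gd: "(g has_derivative (\<lambda>(dz, dt). gz x * dz + gt x * dt)) (at x)" using B by blast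
  have "((\<lambda>x. p * f x + q * g x) has_derivative
     (\<lambda>h. p * ((\<lambda>(dz, dt). fz x * dz + ft x * dt) h) + q * ((\<lambda>(dz, dt). gz x * dz + gt x * dt) h))) (at x)"
    using fd gd by (intro derivative_intros)
  then show "((\<lambda>x. p * f x + q * g x) has_derivative
     (\<lambda>(dz, dt). (p * fz x + q * gz x) * dz + (p * ft x + q * gt x) * dt)) (at x)"
    by (rule has_derivative_eq_rhs) (auto simp: fun_eq_iff algebra_simps split: prod.splits)
qed

lemma abs_le_w: "\<bar>a::real\<bar> \<le> sqrt (c + a^2 + b^2)" if "c \<ge> 0"
  using that by (intro real_le_rsqrt) auto

lemma abs_div_w: "\<bar>a / sqrt (c + a^2 + b^2)\<bar> \<le> 1" if "c > 0" for a b c :: real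
proof -
  have p: "sqrt (c + a^2 + b^2) > 0" using that by (simp add: add_pos_nonneg)
  show ?thesis using abs_le_w[of c a b] that p by (simp add: abs_div divide_le_eq_1)
qed

lemma norm_pair_sq: "norm (x::real\<times>real) = sqrt ((fst x)^2 + (snd x)^2)"
  by (cases x) (simp add: norm_Pair)


lemma aux_div: "(s::real) \<noteq> 0 \<Longrightarrow> e / (4 * s) * s = e / 4" by (simp add: field_simps)

lemma core:
  fixes lam :: "real \<Rightarrow> real" and Gb rb :: "real \<Rightarrow> real \<Rightarrow> real" and h :: "real \<times> real \<Rightarrow> real"
  assumes Glip: "\<And>y1 y2. \<bar>Gb (fst y1) (snd y1) - Gb (fst y2) (snd y2)\<bar> \<le> K * norm (y1 - y2)"
    and rlip: "\<And>y1 y2. \<bar>rb (fst y1) (snd y1) - rb (fst y2) (snd y2)\<bar> \<le> K * norm (y1 - y2)"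
    and Gbd: "\<And>z t. \<bar>Gb z t\<bar> \<le> M" and rbd: "\<And>z t. \<bar>rb z t\<bar> \<le> M"
    and lamabs: "\<And>t. \<bar>lam t\<bar> \<le> Bl"
    and lamlip: "\<And>t1 t2. \<bar>lam t1 - lam t2\<bar> \<le> Klam * \<bar>t1 - t2\<bar>"
    and hb: "\<And>x. \<bar>h x\<bar> \<le> B"
    and visc: "viscosity_solution \<beta> lam Gb rb h"
    and beta: "\<beta> \<ge> Bl * \<bar>K\<bar> + \<bar>M\<bar> * \<bar>Klam\<bar> + 1"
  shows "h a - h b \<le> (Bl * \<bar>K\<bar> + \<bar>M\<bar> * \<bar>Klam\<bar> + 1) * norm (a - b)"
proof (rule ccontr)
  define C where "C = Bl * \<bar>K\<bar> + \<bar>M\<bar> * \<bar>Klam\<bar>"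
  define L where "L = C + 1"
  have Bl0: "Bl \<ge> 0" using lamabs[of 0] by linarith
  have C0: "C \<ge> 0" unfolding C_def using Bl0 by simp
  have L1: "L \<ge> 1" unfolding L_def using C0 by simp
  have betaL: "\<beta> \<ge> L" using beta unfolding L_def C_def by simp
  define A where "A = 2 * Bl * \<bar>M\<bar> + 2"
  have A2: "A \<ge> 2" unfolding A_def using Bl0 by simp
  assume "\<not> h a - h b \<le> (Bl * \<bar>K\<bar> + \<bar>M\<bar> * \<bar>Klam\<bar> + 1) * norm (a - b)"
  then have "h a - h b > L * norm (a - b)" unfolding L_def C_def by simp
  define \<eta> where "\<eta> = h a - h b - L * norm (a - b)"
  have eta0: "\<eta> > 0" using \<open>h a - h b > L * norm (a - b)\<close> unfolding \<eta>_def by simp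
  define \<delta> where "\<delta> = \<eta> / (4 * L)"
  have d0: "\<delta> > 0" unfolding \<delta>_def using eta0 L1 by simp
  have Ld: "L * \<delta> = \<eta> / 4" unfolding \<delta>_def using L1 by simp
  define w :: "real \<times> real \<Rightarrow> real" where "w x = sqrt (1 + (fst x - 0)^2 + (snd x - 0)^2)" for x
  define rho :: "real \<times> real \<Rightarrow> real \<times> real \<Rightarrow> real"
    where "rho y x = sqrt (\<delta>^2 + (fst x - fst y)^2 + (snd x - snd y)^2)" for y x
  have wpos: "w x \<ge> 1" for x
    unfolding w_def by (simp add: real_le_rsqrt)
  have rho_sym: "rho y x = rho x y" for x y
    unfolding rho_def by (simp add: power2_commute)
  have rho_ge: "rho y x \<ge> \<delta>" for x y
    unfolding rho_def using d0 by (intro real_le_rsqrt) auto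
  have rho_norm: "norm (x - y) \<le> rho y x" for x y
    unfolding rho_def norm_pair_sq by (intro real_sqrt_le_mono) auto
  have rho_t: "\<bar>snd x - snd y\<bar> \<le> rho y x" for x y
    unfolding rho_def by (intro real_le_rsqrt) auto
  have rho_ab: "rho b a \<le> \<delta> + norm (a - b)"
  proof -
    have "rho b a = sqrt (\<delta>^2 + (norm (a - b))^2)"
      unfolding rho_def norm_pair_sq by simp
    also have "\<dots> \<le> sqrt ((\<delta> + norm (a - b))^2)"
      using d0 by (intro real_sqrt_le_mono) (simp add: power2_sum)
    also have "\<dots> = \<delta> + norm (a - b)" using d0 by simp
    finally show ?thesis .
  qed
  have wn: "norm x \<le> w x" for x
    unfolding w_def norm_pair_sq by (intro real_sqrt_le_mono) auto
  define \<epsilon> where "\<epsilon> = min (\<delta> / (2 * A)) (\<eta> / (4 * (w a + w b)))"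
  have wab: "w a + w b > 0" using wpos[of a] wpos[of b] by simp
  have e0: "\<epsilon> > 0" unfolding \<epsilon>_def using d0 A2 eta0 wab by simp
  have eA: "\<epsilon> * A < \<delta>"
  proof -
    have "\<epsilon> * A \<le> \<delta> / (2 * A) * A" using A2 unfolding \<epsilon>_def by (intro mult_right_mono) auto
    also have "\<dots> = \<delta> / 2" using A2 by simp
    finally show ?thesis using d0 by simp
  qed
  have ew: "\<epsilon> * (w a + w b) \<le> \<eta> / 4"
  proof -
    have "\<epsilon> * (w a + w b) \<le> \<eta> / (4 * (w a + w b)) * (w a + w b)"
      using wab unfolding \<epsilon>_def by (intro mult_right_mono) auto
    also have "\<dots> = \<eta> / 4" using wab aux_div[of "w a + w b" \<eta>] by simp
    finally show ?thesis .
  qed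
  define \<Phi> :: "(real \<times> real) \<times> (real \<times> real) \<Rightarrow> real"
    where "\<Phi> p = h (fst p) - h (snd p) - L * rho (snd p) (fst p) - \<epsilon> * (w (fst p) + w (snd p))" for p
  have Phi_ab: "\<Phi> (a, b) > 0"
  proof -
    have "L * rho b a \<le> L * (\<delta> + norm (a - b))" using L1 rho_ab by (intro mult_left_mono) auto
    then have "L * rho b a \<le> L * \<delta> + L * norm (a - b)" by (simp add: distrib_left)
    moreover have "\<Phi> (a, b) = h a - h b - L * rho b a - \<epsilon> * (w a + w b)" unfolding \<Phi>_def by simp
    ultimately show ?thesis using ew Ld eta0 \<eta>_def by linarith
  qed
  have hcont: "continuous_on UNIV h" using visc unfolding viscosity_solution_def by blast
  have hc1: "continuous_on UNIV (\<lambda>p::(real\<times>real)\<times>(real\<times>real). h (fst p))"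
    by (rule continuous_on_compose2[OF hcont continuous_on_fst[OF continuous_on_id]]) auto
  have hc2: "continuous_on UNIV (\<lambda>p::(real\<times>real)\<times>(real\<times>real). h (snd p))"
    by (rule continuous_on_compose2[OF hcont continuous_on_snd[OF continuous_on_id]]) auto
  have Phic: "continuous_on UNIV \<Phi>"
    unfolding \<Phi>_def rho_def w_def using hc1 hc2 by (intro continuous_intros) auto
  define S where "S = {p. \<Phi> (a, b) \<le> \<Phi> p}"
  have Sclosed: "closed S" unfolding S_def by (rule closed_Collect_le[OF continuous_on_const Phic])
  define R where "R = 2 * B / \<epsilon>"
  have Ssub: "S \<subseteq> cball 0 R \<times> cball 0 R"
  proof
    fix p assume "p \<in> S"
    then have "\<Phi> p > 0" using Phi_ab unfolding S_def by simp
    moreover have "h (fst p) - h (snd p) \<le> 2 * B" using hb[of "fst p"] hb[of "snd p"] by linarith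
    moreover have "L * rho (snd p) (fst p) \<ge> 0" using L1 rho_ge[of "snd p" "fst p"] d0 by simp
    ultimately have "\<epsilon> * (w (fst p) + w (snd p)) < 2 * B" unfolding \<Phi>_def by linarith
    moreover have "0 \<le> \<epsilon> * w (fst p)" using e0 wpos[of "fst p"] by (intro mult_nonneg_nonneg) linarith+
    moreover have "0 \<le> \<epsilon> * w (snd p)" using e0 wpos[of "snd p"] by (intro mult_nonneg_nonneg) linarith+
    moreover have "\<epsilon> * (w (fst p) + w (snd p)) = \<epsilon> * w (fst p) + \<epsilon> * w (snd p)" by (simp add: distrib_left)
    ultimately have "\<epsilon> * w (fst p) \<le> 2 * B" "\<epsilon> * w (snd p) \<le> 2 * B" by linarith+
    then have "w (fst p) \<le> R" "w (snd p) \<le> R" unfolding R_def using e0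
      by (simp_all add: field_simps)
    then have "norm (fst p) \<le> R" "norm (snd p) \<le> R" using wn[of "fst p"] wn[of "snd p"] by auto
    then show "p \<in> cball 0 R \<times> cball 0 R" by (cases p) auto
  qed
  have Sbd: "bounded S" by (rule bounded_subset[OF bounded_Times[OF bounded_cball bounded_cball] Ssub])
  have Scomp: "compact S" using Sbd Sclosed by (simp add: compact_eq_bounded_closed)
  have abS: "(a, b) \<in> S" unfolding S_def by simp
  then have Sne: "S \<noteq> {}" by blast
  obtain p where pS: "p \<in> S" and pmax: "\<forall>q\<in>S. \<Phi> q \<le> \<Phi> p"
    using continuous_attains_sup[OF Scomp Sne continuous_on_subset[OF Phic]] by auto
  have pglob: "\<Phi> q \<le> \<Phi> p" for q
  proof (cases "q \<in> S")
    case True then show ?thesis using pmax by blast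
  next
    case False then show ?thesis using pS unfolding S_def by simp
  qed
  obtain z1 t1 z2 t2 where pdef: "p = ((z1, t1), (z2, t2))" by (cases p) auto
  define x where "x = (z1, t1)"
  define y where "y = (z2, t2)"
  have Pp: "\<Phi> p > 0" using pS Phi_ab unfolding S_def by simp
  define \<rho> where "\<rho> = rho y x"
  have rho_yx: "rho x y = \<rho>" unfolding \<rho>_def by (rule rho_sym[symmetric])
  have hdiff: "h x - h y > L * \<rho>"
  proof -
    have "\<epsilon> * (w x + w y) > 0" using e0 wpos[of x] wpos[of y] by simp
    then show ?thesis using Pp unfolding \<Phi>_def pdef x_def y_def \<rho>_def by simp
  qed
  have sub: "hamF \<beta> lam Gb rb x (h x)
      (L * ((fst x - fst y) / rho y x) + \<epsilon> * ((fst x - 0) / w x))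
      (L * ((snd x - snd y) / rho y x) + \<epsilon> * ((snd x - 0) / w x)) \<le> 0"
  proof -
    have C1: "C1_test (\<lambda>u. L * rho y u + \<epsilon> * w u)
       (\<lambda>u. L * ((fst u - fst y) / rho y u) + \<epsilon> * ((fst u - 0) / w u))
       (\<lambda>u. L * ((snd u - snd y) / rho y u) + \<epsilon> * ((snd u - 0) / w u))"
      unfolding rho_def w_def by (rule C1_lin[OF C1_q C1_q]) (use d0 in simp_all)
    have lm: "local_max_at (\<lambda>u. h u - (L * rho y u + \<epsilon> * w u)) x"
      unfolding local_max_at_def
    proof (intro exI[of _ 1] conjI ballI)
      fix u
      have "\<Phi> (u, y) \<le> \<Phi> p" by (rule pglob)
      then show "h u - (L * rho y u + \<epsilon> * w u) \<le> h x - (L * rho y x + \<epsilon> * w x)"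
        unfolding \<Phi>_def pdef x_def y_def by (simp add: distrib_left; linarith?)
    qed simp
    show ?thesis using visc C1 lm unfolding viscosity_solution_def by blast
  qed
  have super: "hamF \<beta> lam Gb rb y (h y)
      ((- L) * ((fst y - fst x) / rho x y) + (- \<epsilon>) * ((fst y - 0) / w y))
      ((- L) * ((snd y - snd x) / rho x y) + (- \<epsilon>) * ((snd y - 0) / w y)) \<ge> 0"
  proof -
    have C1: "C1_test (\<lambda>u. (- L) * rho x u + (- \<epsilon>) * w u)
       (\<lambda>u. (- L) * ((fst u - fst x) / rho x u) + (- \<epsilon>) * ((fst u - 0) / w u))
       (\<lambda>u. (- L) * ((snd u - snd x) / rho x u) + (- \<epsilon>) * ((snd u - 0) / w u))"
      unfolding rho_def w_def by (rule C1_lin[OF C1_q C1_q]) (use d0 in simp_all)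
    have lm: "local_min_at (\<lambda>u. h u - ((- L) * rho x u + (- \<epsilon>) * w u)) y"
      unfolding local_min_at_def
    proof (intro exI[of _ 1] conjI ballI)
      fix u
      have "\<Phi> (x, u) \<le> \<Phi> p" by (rule pglob)
      then show "h y - ((- L) * rho x y + (- \<epsilon>) * w y) \<le> h u - ((- L) * rho x u + (- \<epsilon>) * w u)"
        unfolding \<Phi>_def pdef x_def y_def by (simp add: rho_sym[of "(z1, t1)"] distrib_left; linarith?)
    qed simp
    show ?thesis using visc C1 lm unfolding viscosity_solution_def by blast
  qed
  define u1 where "u1 = (z1 - z2) / \<rho>"
  define v1 where "v1 = (t1 - t2) / \<rho>"
  define w1 where "w1 = w x"
  define w2 where "w2 = w y"
  define g1 where "g1 = lam t1 * Gb z1 t1"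
  define g2 where "g2 = lam t2 * Gb z2 t2"
  define s1 where "s1 = lam t1 * rb z1 t1"
  define s2 where "s2 = lam t2 * rb z2 t2"
  have rpos: "\<rho> > 0" using rho_ge[of y x] d0 unfolding \<rho>_def by simp
  have e1: "(z2 - z1) / \<rho> = - u1" "(t2 - t1) / \<rho> = - v1" unfolding u1_def v1_def
    by (simp_all add: minus_divide_left)
  have sub': "\<beta> * h x - g1 * (L * u1 + \<epsilon> * (z1 / w1)) - (L * v1 + \<epsilon> * (t1 / w1)) - s1 \<le> 0"
    using sub unfolding hamF_def g1_def s1_def u1_def v1_def w1_def \<rho>_def x_def y_def by simp
  have super': "\<beta> * h y - g2 * ((- L) * (- u1) + (- \<epsilon>) * (z2 / w2)) - ((- L) * (- v1) + (- \<epsilon>) * (t2 / w2)) - s2 \<ge> 0"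
    using super e1 rho_yx unfolding hamF_def g2_def s2_def w2_def x_def y_def by simp
  have u1b: "\<bar>u1\<bar> \<le> 1"
  proof -
    have "\<bar>z1 - z2\<bar> \<le> \<rho>" unfolding \<rho>_def rho_def x_def y_def by (intro real_le_rsqrt) auto
    then show ?thesis unfolding u1_def using rpos by (simp add: abs_div divide_le_eq_1)
  qed
  have q1: "\<bar>z1 / w1\<bar> \<le> 1" "\<bar>t1 / w1\<bar> \<le> 1"
    unfolding w1_def w_def x_def using abs_div_w[of 1 z1 t1] abs_div_w[of 1 t1 z1]
    by (simp_all add: add.commute add.left_commute)
  have q2: "\<bar>z2 / w2\<bar> \<le> 1" "\<bar>t2 / w2\<bar> \<le> 1"
    unfolding w2_def w_def y_def using abs_div_w[of 1 z2 t2] abs_div_w[of 1 t2 z2]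
    by (simp_all add: add.commute add.left_commute)
  have nxy: "norm (x - y) \<le> \<rho>" unfolding \<rho>_def by (rule rho_norm)
  have txy: "\<bar>t1 - t2\<bar> \<le> \<rho>" using rho_t[of x y] unfolding \<rho>_def x_def y_def by simp
  have diffb: "\<bar>lam t1 * P1 - lam t2 * P2\<bar> \<le> C * \<rho>"
    if P: "\<bar>P1 - P2\<bar> \<le> K * norm (x - y)" "\<bar>P2\<bar> \<le> M" for P1 P2
  proof -
    have "lam t1 * P1 - lam t2 * P2 = lam t1 * (P1 - P2) + P2 * (lam t1 - lam t2)"
      by (simp add: algebra_simps)
    then have "\<bar>lam t1 * P1 - lam t2 * P2\<bar> \<le> \<bar>lam t1 * (P1 - P2)\<bar> + \<bar>P2 * (lam t1 - lam t2)\<bar>"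
      using abs_triangle_ineq[of "lam t1 * (P1 - P2)" "P2 * (lam t1 - lam t2)"] by simp
    then have "\<bar>lam t1 * P1 - lam t2 * P2\<bar> \<le> \<bar>lam t1\<bar> * \<bar>P1 - P2\<bar> + \<bar>P2\<bar> * \<bar>lam t1 - lam t2\<bar>"
      by (simp only: abs_mult)
    also have "\<dots> \<le> Bl * (\<bar>K\<bar> * \<rho>) + \<bar>M\<bar> * (\<bar>Klam\<bar> * \<rho>)"
    proof (intro add_mono mult_mono)
      have k1: "K * norm (x - y) \<le> \<bar>K\<bar> * norm (x - y)" by (intro mult_right_mono) auto
      have k2: "\<bar>K\<bar> * norm (x - y) \<le> \<bar>K\<bar> * \<rho>" using nxy by (intro mult_left_mono) auto
      show "\<bar>P1 - P2\<bar> \<le> \<bar>K\<bar> * \<rho>" using P(1) k1 k2 by linarith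
      have k3: "Klam * \<bar>t1 - t2\<bar> \<le> \<bar>Klam\<bar> * \<bar>t1 - t2\<bar>" by (intro mult_right_mono) auto
      have k4: "\<bar>Klam\<bar> * \<bar>t1 - t2\<bar> \<le> \<bar>Klam\<bar> * \<rho>" using txy by (intro mult_left_mono) auto
      show "\<bar>lam t1 - lam t2\<bar> \<le> \<bar>Klam\<bar> * \<rho>" using lamlip[of t1 t2] k3 k4 by linarith
    qed (use lamabs P(2) Bl0 rpos in auto)
    finally show ?thesis unfolding C_def by (simp add: algebra_simps)
  qed
  have gd: "\<bar>g1 - g2\<bar> \<le> C * \<rho>"
    unfolding g1_def g2_def using Glip[of x y] Gbd[of z2 t2]
    by (intro diffb) (auto simp: x_def y_def)
  have sd: "\<bar>s1 - s2\<bar> \<le> C * \<rho>"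
    unfolding s1_def s2_def using rlip[of x y] rbd[of z2 t2]
    by (intro diffb) (auto simp: x_def y_def)
  have g1b: "\<bar>g1\<bar> \<le> Bl * \<bar>M\<bar>" unfolding g1_def abs_mult
    using lamabs[of t1] Gbd[of z1 t1] by (intro mult_mono) auto
  have g2b: "\<bar>g2\<bar> \<le> Bl * \<bar>M\<bar>" unfolding g2_def abs_mult
    using lamabs[of t2] Gbd[of z2 t2] by (intro mult_mono) auto
  have m1: "L * u1 * (g1 - g2) \<le> L * (C * \<rho>)"
  proof -
    have "\<bar>u1 * (g1 - g2)\<bar> \<le> 1 * (C * \<rho>)" unfolding abs_mult using u1b gd by (intro mult_mono) auto
    then have "u1 * (g1 - g2) \<le> C * \<rho>" by simp
    then show ?thesis using L1 by (simp add: mult.assoc mult_left_mono)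
  qed
  have m2: "g1 * (z1 / w1) + g2 * (z2 / w2) + t1 / w1 + t2 / w2 \<le> A"
  proof -
    have "\<bar>g1 * (z1 / w1)\<bar> \<le> Bl * \<bar>M\<bar> * 1" unfolding abs_mult using g1b q1 by (intro mult_mono) auto
    moreover have "\<bar>g2 * (z2 / w2)\<bar> \<le> Bl * \<bar>M\<bar> * 1" unfolding abs_mult using g2b q2 by (intro mult_mono) auto
    ultimately show ?thesis using q1 q2 unfolding A_def by linarith
  qed
  have key: "\<beta> * (h x - h y) \<le> L * u1 * (g1 - g2) + \<epsilon> * (g1 * (z1 / w1) + g2 * (z2 / w2) + t1 / w1 + t2 / w2) + (s1 - s2)"
    using sub' super' by (simp add: algebra_simps)
  have m3: "\<epsilon> * (g1 * (z1 / w1) + g2 * (z2 / w2) + t1 / w1 + t2 / w2) \<le> \<epsilon> * A"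
    using m2 e0 by (intro mult_left_mono) auto
  have "\<beta> * (L * \<rho>) < \<beta> * (h x - h y)" using hdiff betaL L1 by (intro mult_strict_left_mono) auto
  moreover have "(C + 1) * (L * \<rho>) \<le> \<beta> * (L * \<rho>)"
    using beta L1 rpos unfolding C_def by (intro mult_right_mono) auto
  moreover have "(C + 1) * (L * \<rho>) = L * (C * \<rho>) + C * \<rho> + \<rho>" unfolding L_def by (simp add: algebra_simps)
  ultimately have "\<rho> < \<epsilon> * A" using key m1 m3 sd by linarith
  then show False using eA rho_ge[of y x] unfolding \<rho>_def by linarith
qed

theorem lemmaF6:
  fixes F :: "'x measure" and r :: "'x \<Rightarrow> real"
    and G0 G1 :: "'x \<Rightarrow> real \<Rightarrow> real \<Rightarrow> real"
    and pol :: "'p \<Rightarrow> 'x \<Rightarrow> real \<Rightarrow> real \<Rightarrow> real"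
    and \<Theta> :: "'p set" and lam :: "real \<Rightarrow> real" and Tp M K Klam Blam :: real
  assumes F: "prob_space F"
    and pi_prob: "\<And>th x z t. th \<in> \<Theta> \<Longrightarrow> 0 \<le> pol th x z t \<and> pol th x z t \<le> 1"
    and Tp: "Tp > 0"
    and lam_per: "\<And>t. lam (t + Tp) = lam t"
    and Gbar_per: "\<And>th z t. th \<in> \<Theta> \<Longrightarrow> Gbar F G0 G1 pol th z (t + Tp) = Gbar F G0 G1 pol th z t"
    and rbar_per: "\<And>th z t. th \<in> \<Theta> \<Longrightarrow> rbar F r pol th z (t + Tp) = rbar F r pol th z t"
    and Gbar_lip: "\<And>th y1 y2. th \<in> \<Theta> \<Longrightarrow>
        \<bar>Gbar F G0 G1 pol th (fst y1) (snd y1) - Gbar F G0 G1 pol th (fst y2) (snd y2)\<bar> \<le> K * norm (y1 - y2)"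
    and rbar_lip: "\<And>th y1 y2. th \<in> \<Theta> \<Longrightarrow>
        \<bar>rbar F r pol th (fst y1) (snd y1) - rbar F r pol th (fst y2) (snd y2)\<bar> \<le> K * norm (y1 - y2)"
    and Gbar_bd: "\<And>th z t. th \<in> \<Theta> \<Longrightarrow> \<bar>Gbar F G0 G1 pol th z t\<bar> \<le> M"
    and rbar_bd: "\<And>th z t. th \<in> \<Theta> \<Longrightarrow> \<bar>rbar F r pol th z t\<bar> \<le> M"
    and lam_bd: "\<And>t. lam t \<le> Blam"
    and lam_lip: "\<And>t1 t2. \<bar>lam t1 - lam t2\<bar> \<le> Klam * \<bar>t1 - t2\<bar>"
    and lam_pos: "\<exists>l>0. \<forall>t. l \<le> lam t"
  shows "\<exists>\<beta>0. \<forall>\<beta>\<ge>\<beta>0. \<exists>L1::real. \<forall>th\<in>\<Theta>. \<forall>h.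
           (bounded (range h) \<and> (\<forall>z t. h (z, t + Tp) = h (z, t)) \<and>
            viscosity_solution \<beta> lam (Gbar F G0 G1 pol th) (rbar F r pol th) h)
           \<longrightarrow> locally_lipschitz_with L1 h"
  proof -
  obtain l where l0: "l > 0" and ll: "\<forall>t. l \<le> lam t" using lam_pos by blast
  have lamabs: "\<bar>lam t\<bar> \<le> Blam" for t
  proof -
    have "l \<le> lam t" using ll by blast
    then have "lam t > 0" using l0 by linarith
    then show ?thesis using lam_bd[of t] by simp
  qed
  define L where "L = Blam * \<bar>K\<bar> + \<bar>M\<bar> * \<bar>Klam\<bar> + 1"
  show ?thesis
  proof (intro exI[of _ L] allI impI exI[of _ L] ballI)
    fix \<beta> :: real and th h
    assume beta: "L \<le> \<beta>" and th: "th \<in> \<Theta>"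
    assume H: "bounded (range h) \<and> (\<forall>z t. h (z, t + Tp) = h (z, t)) \<and>
            viscosity_solution \<beta> lam (Gbar F G0 G1 pol th) (rbar F r pol th) h"
    obtain B where B: "\<forall>x\<in>range h. norm x \<le> B" using H bounded_iff by blast
    have hb: "\<bar>h x\<bar> \<le> B" for x
    proof -
      have "norm (h x) \<le> B" using B by blast
      then show ?thesis by simp
    qed
    have c: "h a - h b \<le> L * norm (a - b)" for a b
      unfolding L_def
    proof (rule core[of "Gbar F G0 G1 pol th" K "rbar F r pol th" M lam Blam Klam h B \<beta>])
      show "viscosity_solution \<beta> lam (Gbar F G0 G1 pol th) (rbar F r pol th) h" using H by blast
      show "Blam * \<bar>K\<bar> + \<bar>M\<bar> * \<bar>Klam\<bar> + 1 \<le> \<beta>" using beta unfolding L_def .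
    qed (fact Gbar_lip[OF th] rbar_lip[OF th] Gbar_bd[OF th] rbar_bd[OF th] lamabs lam_lip hb)+
    show "locally_lipschitz_with L h"
      unfolding locally_lipschitz_with_def
    proof (intro exI[of _ 1] conjI allI impI)
      fix y1 y2 :: "real \<times> real"
      show "\<bar>h y1 - h y2\<bar> \<le> L * norm (y1 - y2)"
        using c[of y1 y2] c[of y2 y1] by (simp add: norm_minus_commute)
    qed simp
  qed
qed

end
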